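(* Consider the finite-horizon Markov decision process described in the context, with $N$ sources, $d\ge 1$ orthogonal channels, horizon $T<\infty$, transmission success probability $p\in(0,1]$ and arrival probabilities $q_1,\dots,q_N$. Let $V^*_t(x)$ be the optimal cost-to-go from epoch $t$ in state $x$ and let $V^\Delta_t(x)$ be the cost-to-go from epoch $t$ in state $x$ under the stationary policy $\pi^\Delta$. Set $$p_d := 1-(1-p)^d = p\,C_p,\qquad C_p=\sum_{l=0}^{d-1}(-1)^l\binom{d}{l+1}p^l .$$ Then there exists a sequence of non-negative functions $\{\mathcal Z_t(x)\}_{t\le T}$ on the state space such that $$V^\Delta_t(x)-V^*_t(x) = p\cdot p_d\,\mathcal Z_t(x)\quad\text{for each } t \text{ and each state } x.$$ Further there exist constants $D_1(k)$ and $D_2(k)$, $k=0,\dots,T-1$, independent of $p$, such that $$|\mathcal Z_t(x)|\le D_1(T-t)\,\|x\|_\infty + D_2(T-t),\qquad\text{where } \|x\|_\infty:=\max_{n\in\{1,\dots,N\}}\{h_n+1\}.$$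
   Context: Time is slotted, $t=1,\dots,T$. There are sources $\mathcal N=\{1,\dots,N\}$, each with a buffer of size one, and $d$ channels to a common destination. A state is $x=(\mathbf g,\mathbf h)$ with $\mathbf h=(h_1,\dots,h_N)$, $h_n$ a non-negative integer (age of information of source $n$ at the destination), and $\mathbf g=(g_1,\dots,g_N)$ with each $g_n$ either the symbol $\psi$ (source $n$ has no packet) or a non-negative integer with $g_n<h_n$ (age of the packet waiting at source $n$). Let $S_x=\{n: g_n\neq\psi\}$, $N_x=|S_x|$, $N_x^d=\min\{N_x,d\}$. At each epoch $t<T$ the admissible actions in state $x$ are the subsets $\mathbf a\subseteq S_x$ with $|\mathbf a|=N_x^d$ (so no transmission if $N_x=0$). Transitions: given state $x$ and action $\mathbf a$, each source in $\mathbf a$ is independently successfully transferred with probability $p$ (let $W\subseteq\mathbf a$ be the successful set), and independently each source $n$ receives a new packet with probability $q_n$ (let $\mathcal C$ be the set of sources receiving a new packet); all these events are independent. The next state is: $h_n'=g_n+1$ if $n\in W$, $h_n'=h_n+1$ otherwise; $g_n'=0$ if $n\in\mathcal C$; $g_n'=\psi$ if $n\in W\setminus\mathcal C$; $g_n'=g_n+1$ if $n\notin\mathcal C\cup W$ (with $\psi+1=\psi$). The per-stage cost at every epoch $t=1,\dots,T$ is $c(x)=\sum_{n=1}^N h_n$. Thus $V^*_T(x)=V^\Delta_T(x)=\sum_n h_n$, and for $t<T$, $V^*_t(x)=\min_{\mathbf a}\big[c(x)+\mathbb E[V^*_{t+1}(X')\mid x,\mathbf a]\big]$, i.e. $V^*_t(x)$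 is the minimum over all (possibly non-stationary, history-dependent) policies of the expected total cost $\mathbb E[\sum_{s=t}^T c(X(s))]$ started from $X(t)=x$; $V^\Delta_t(x)$ is the same expected total cost when actions are chosen by $\pi^\Delta$. The policy $\pi^\Delta$ uses, at every epoch $t<T$, the decision rule $d^\Delta(x)\in\arg\min_{\mathbf a}\sum_{i\in\mathbf a}(g_i-h_i)$ over admissible actions $\mathbf a$ (i.e., among sources with packets, choose the $N_x^d$ sources with largest $h_i-g_i$). *)

theory Defs
  imports Main "HOL-Library.Multiset" Complex_Main
begin

text \<open>Sources are indexed by 0..N-1. A state is a pair (g, h):
  g n = None encodes the symbol psi (no packet at source n), g n = Some a
  means a packet of age a is waiting; h n is the age of information of source n.
  Only the components n < N are meaningful.\<close>

type_synonym state = "(nat \<Rightarrow> nat option) \<times> (nat \<Rightarrow> nat)"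

definition valid_state :: "nat \<Rightarrow> state \<Rightarrow> bool" where
  "valid_state N x \<longleftrightarrow>
     (\<forall>n<N. case fst x n of None \<Rightarrow> True | Some a \<Rightarrow> a < snd x n)"

definition srcs :: "nat \<Rightarrow> state \<Rightarrow> nat set" where
  "srcs N x = {n. n < N \<and> fst x n \<noteq> None}"

definition adm :: "nat \<Rightarrow> nat \<Rightarrow> state \<Rightarrow> nat set set" where
  "adm N d x = {a. a \<subseteq> srcs N x \<and> card a = min (card (srcs N x)) d}"

definition cost :: "nat \<Rightarrow> state \<Rightarrow> real" where
  "cost N x = (\<Sum>n<N. real (snd x n))"

definition nxt :: "state \<Rightarrow> nat set \<Rightarrow> nat set \<Rightarrow> state" where
  "nxt x W C =
     ((\<lambda>n. if n \<in> C then Some 0 else if n \<in> W then None else map_option Suc (fst x n)),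
      (\<lambda>n. if n \<in> W then Suc (the (fst x n)) else Suc (snd x n)))"

definition trans_prob :: "nat \<Rightarrow> real \<Rightarrow> (nat \<Rightarrow> real) \<Rightarrow> nat set \<Rightarrow> nat set \<Rightarrow> nat set \<Rightarrow> real" where
  "trans_prob N p q a W C =
     p ^ card W * (1 - p) ^ (card a - card W)
     * (\<Prod>n\<in>C. q n) * (\<Prod>n\<in>{..<N} - C. 1 - q n)"

definition expect :: "nat \<Rightarrow> real \<Rightarrow> (nat \<Rightarrow> real) \<Rightarrow> (state \<Rightarrow> real) \<Rightarrow> state \<Rightarrow> nat set \<Rightarrow> real" where
  "expect N p q f x a =
     (\<Sum>W\<in>Pow a. \<Sum>C\<in>Pow {..<N}. trans_prob N p q a W C * f (nxt x W C))"

text \<open>Optimal cost-to-go with k epochs remaining: V*_t = Vopt (T - t) (Bellman recursion).\<close>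
fun Vopt :: "nat \<Rightarrow> nat \<Rightarrow> real \<Rightarrow> (nat \<Rightarrow> real) \<Rightarrow> nat \<Rightarrow> state \<Rightarrow> real" where
  "Vopt N d p q 0 x = cost N x"
| "Vopt N d p q (Suc k) x =
     cost N x + Min ((\<lambda>a. expect N p q (Vopt N d p q k) x a) ` adm N d x)"

fun Vpol :: "nat \<Rightarrow> real \<Rightarrow> (nat \<Rightarrow> real) \<Rightarrow> (state \<Rightarrow> nat set) \<Rightarrow> nat \<Rightarrow> state \<Rightarrow> real" where
  "Vpol N p q dr 0 x = cost N x"
| "Vpol N p q dr (Suc k) x = cost N x + expect N p q (Vpol N p q dr k) x (dr x)"

definition is_delta_action :: "nat \<Rightarrow> nat \<Rightarrow> state \<Rightarrow> nat set \<Rightarrow> bool" where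
  "is_delta_action N d x a \<longleftrightarrow> a \<in> adm N d x \<and>
     (\<forall>b\<in>adm N d x. (\<Sum>i\<in>a. int (the (fst x i)) - int (snd x i))
                     \<le> (\<Sum>i\<in>b. int (the (fst x i)) - int (snd x i)))"

definition state_norm :: "nat \<Rightarrow> state \<Rightarrow> real" where
  "state_norm N x = Max ((\<lambda>n. real (snd x n + 1)) ` {..<N})"

definition p_d :: "nat \<Rightarrow> real \<Rightarrow> real" where
  "p_d d p = 1 - (1 - p) ^ d"

definition C_p :: "nat \<Rightarrow> real \<Rightarrow> real" where
  "C_p d p = (\<Sum>l<d. (-1) ^ l * real (d choose (l + 1)) * p ^ l)"

end

theory Submission
  imports Defs
begin


definition Qc :: "nat \<Rightarrow> (nat \<Rightarrow> real) \<Rightarrow> nat set \<Rightarrow> real" where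
  "Qc N q C = (\<Prod>n\<in>C. q n) * (\<Prod>n\<in>{..<N} - C. 1 - q n)"

definition Pw :: "real \<Rightarrow> nat set \<Rightarrow> nat set \<Rightarrow> real" where
  "Pw p a W = (\<Prod>j\<in>W. p) * (\<Prod>j\<in>a - W. 1 - p)"

lemma Qc_sum: "(\<Sum>C\<in>Pow {..<N}. Qc N q C) = 1"
proof -
  have "(\<Prod>n\<in>{..<N}. q n + (1 - q n)) = (\<Sum>C\<in>Pow {..<N}. Qc N q C)"
    unfolding Qc_def by (rule prod_add) simp
  then show ?thesis by simp
qed

lemma Qc_nonneg: "\<forall>n<N. 0 \<le> q n \<and> q n \<le> 1 \<Longrightarrow> C \<subseteq> {..<N} \<Longrightarrow> 0 \<le> Qc N q C"
  unfolding Qc_def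
  by (intro mult_nonneg_nonneg prod_nonneg) auto

lemma Pw_sum: "finite a \<Longrightarrow> (\<Sum>W\<in>Pow a. Pw p a W) = 1"
proof -
  assume "finite a"
  then have "(\<Prod>n\<in>a. p + (1 - p)) = (\<Sum>W\<in>Pow a. Pw p a W)"
    unfolding Pw_def by (rule prod_add)
  then show ?thesis by simp
qed

lemma Pw_nonneg: "0 \<le> p \<Longrightarrow> p \<le> 1 \<Longrightarrow> 0 \<le> Pw p a W"
  unfolding Pw_def by (intro mult_nonneg_nonneg prod_nonneg) auto

lemma Pw_eq: "finite a \<Longrightarrow> W \<subseteq> a \<Longrightarrow> Pw p a W = p ^ card W * (1 - p) ^ (card a - card W)"
  unfolding Pw_def by (simp add: card_Diff_subset finite_subset)

lemma Pw_empty: "Pw p a {} = (1 - p) ^ card a"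
  unfolding Pw_def by simp

lemma trans_prob_eq: "finite a \<Longrightarrow> W \<subseteq> a \<Longrightarrow> trans_prob N p q a W C = Pw p a W * Qc N q C"
  unfolding trans_prob_def Qc_def by (simp add: Pw_eq)

lemma Pw_marg:
  assumes "finite a" "i \<in> a"
  shows "(\<Sum>W\<in>{W\<in>Pow a. i \<in> W}. Pw p a W) = p"
proof -
  have eq: "{W\<in>Pow a. i \<in> W} = insert i ` Pow (a - {i})"
  proof
    show "{W\<in>Pow a. i \<in> W} \<subseteq> insert i ` Pow (a - {i})"
    proof
      fix W assume "W \<in> {W\<in>Pow a. i \<in> W}"
      then have "W = insert i (W - {i})" "W - {i} \<in> Pow (a - {i})" by auto
      then show "W \<in> insert i ` Pow (a - {i})" by blast
    qed
  qed (use assms in auto)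
  have inj: "inj_on (insert i) (Pow (a - {i}))"
    by (rule inj_onI) (metis Diff_insert_absorb PowD subset_Diff_insert)
  have "(\<Sum>W\<in>{W\<in>Pow a. i \<in> W}. Pw p a W) = (\<Sum>V\<in>Pow (a - {i}). Pw p a (insert i V))"
    unfolding eq by (rule sum.reindex[OF inj, unfolded comp_def])
  also have "\<dots> = (\<Sum>V\<in>Pow (a - {i}). p * Pw p (a - {i}) V)"
  proof (rule sum.cong[OF refl])
    fix V assume V: "V \<in> Pow (a - {i})"
    then have "i \<notin> V" "finite V" using assms finite_subset by auto
    moreover have "a - insert i V = a - {i} - V" by auto
    ultimately show "Pw p a (insert i V) = p * Pw p (a - {i}) V"
      unfolding Pw_def by simp
  qed
  also have "\<dots> = p" using Pw_sum[of "a - {i}" p] assms by (simp add: sum_distrib_left[symmetric])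
  finally show ?thesis .
qed

lemma Pw_lin:
  assumes "finite a"
  shows "(\<Sum>W\<in>Pow a. Pw p a W * (\<Sum>i\<in>W. w i)) = p * (\<Sum>i\<in>a. w i)"
proof -
  have "(\<Sum>W\<in>Pow a. Pw p a W * (\<Sum>i\<in>W. w i)) = (\<Sum>W\<in>Pow a. \<Sum>i\<in>a. if i \<in> W then Pw p a W * w i else 0)"
  proof (rule sum.cong[OF refl])
    fix W assume "W \<in> Pow a"
    then have "W \<subseteq> a" by auto
    then have "(\<Sum>i\<in>W. w i) = (\<Sum>i\<in>a. if i \<in> W then w i else 0)"
      using assms by (simp add: sum.If_cases Int_absorb1)
    then show "Pw p a W * (\<Sum>i\<in>W. w i) = (\<Sum>i\<in>a. if i \<in> W then Pw p a W * w i else 0)"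
      by (auto simp add: sum_distrib_left intro!: sum.cong)
  qed
  also have "\<dots> = (\<Sum>i\<in>a. \<Sum>W\<in>Pow a. if i \<in> W then Pw p a W * w i else 0)"
    by (rule sum.swap)
  also have "\<dots> = (\<Sum>i\<in>a. p * w i)"
  proof (rule sum.cong[OF refl])
    fix i assume i: "i \<in> a"
    have "(\<Sum>W\<in>Pow a. if i \<in> W then Pw p a W * w i else 0) = (\<Sum>W\<in>{W\<in>Pow a. i \<in> W}. Pw p a W * w i)"
      using assms by (simp add: sum.inter_filter[symmetric])
    also have "\<dots> = p * w i" using Pw_marg[OF assms i, of p] by (simp add: sum_distrib_right[symmetric])
    finally show "(\<Sum>W\<in>Pow a. if i \<in> W then Pw p a W * w i else 0) = p * w i" .
  qed
  finally show ?thesis by (simp add: sum_distrib_left)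
qed

lemma expect_Pw: "finite a \<Longrightarrow> expect N p q f x a =
   (\<Sum>W\<in>Pow a. Pw p a W * (\<Sum>C\<in>Pow {..<N}. Qc N q C * f (nxt x W C)))"
  unfolding expect_def
  by (auto simp: trans_prob_eq sum_distrib_left mult.assoc intro!: sum.cong)

lemma expect_affine: "finite a \<Longrightarrow> expect N p q (\<lambda>y. c * f y + e) x a = c * expect N p q f x a + e"
proof -
  assume a: "finite a"
  have "expect N p q (\<lambda>y. c * f y + e) x a =
    (\<Sum>W\<in>Pow a. Pw p a W * (c * (\<Sum>C\<in>Pow {..<N}. Qc N q C * f (nxt x W C)) + e * (\<Sum>C\<in>Pow {..<N}. Qc N q C)))"
    unfolding expect_Pw[OF a]
    by (auto simp: algebra_simps sum.distrib sum_distrib_left intro!: sum.cong)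
  also have "\<dots> = c * (\<Sum>W\<in>Pow a. Pw p a W * (\<Sum>C\<in>Pow {..<N}. Qc N q C * f (nxt x W C))) + e * (\<Sum>W\<in>Pow a. Pw p a W)"
    by (simp add: Qc_sum algebra_simps sum.distrib sum_distrib_left)
  also have "\<dots> = c * expect N p q f x a + e"
    using a by (simp add: expect_Pw Pw_sum)
  finally show ?thesis .
qed

lemma expect_diff: "expect N p q (\<lambda>y. f y - g y) x a = expect N p q f x a - expect N p q g x a"
  unfolding expect_def by (simp add: algebra_simps sum_subtractf)

lemma expect_mono:
  assumes "finite a" "0 \<le> p" "p \<le> 1" "\<forall>n<N. 0 \<le> q n \<and> q n \<le> 1"
    and "\<And>W C. W \<subseteq> a \<Longrightarrow> C \<subseteq> {..<N} \<Longrightarrow> f (nxt x W C) \<le> g (nxt x W C)"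
  shows "expect N p q f x a \<le> expect N p q g x a"
  unfolding expect_Pw[OF assms(1)]
  using assms
  by (intro sum_mono mult_left_mono Pw_nonneg) (auto intro!: mult_left_mono Qc_nonneg)

definition dd :: "state \<Rightarrow> nat \<Rightarrow> real" where
  "dd x i = real (snd x i) - real (the (fst x i))"

lemma cost_nxt:
  assumes "valid_state N x" "W \<subseteq> srcs N x"
  shows "cost N (nxt x W C) = cost N x + N - (\<Sum>i\<in>W. dd x i)"
proof -
  have W: "W \<subseteq> {..<N}" using assms(2) unfolding srcs_def by auto
  have "cost N (nxt x W C) = (\<Sum>n<N. real (snd x n) + 1 - (if n \<in> W then dd x n else 0))"
    unfolding cost_def nxt_def dd_def by (auto intro!: sum.cong)
  also have "\<dots> = cost N x + N - (\<Sum>n<N. if n \<in> W then dd x n else 0)"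
    unfolding cost_def by (simp add: sum.distrib sum_subtractf)
  also have "(\<Sum>n<N. if n \<in> W then dd x n else 0) = (\<Sum>i\<in>W. dd x i)"
    using W by (simp add: sum.If_cases Int_absorb1)
  finally show ?thesis .
qed

lemma expect_cost:
  assumes "valid_state N x" "a \<subseteq> srcs N x"
  shows "expect N p q (cost N) x a = cost N x + N - p * (\<Sum>i\<in>a. dd x i)"
proof -
  have fa: "finite a" using assms(2) unfolding srcs_def by (auto intro: finite_subset)
  have "expect N p q (cost N) x a = (\<Sum>W\<in>Pow a. Pw p a W * ((cost N x + N) - (\<Sum>i\<in>W. dd x i)))"
    unfolding expect_Pw[OF fa]
  proof (rule sum.cong[OF refl])
    fix W assume "W \<in> Pow a"
    then have "W \<subseteq> srcs N x" using assms by auto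
    then show "Pw p a W * (\<Sum>C\<in>Pow {..<N}. Qc N q C * cost N (nxt x W C)) =
      Pw p a W * (cost N x + real N - sum (dd x) W)"
      using cost_nxt[OF assms(1)] by (simp add: sum_distrib_right[symmetric] Qc_sum)
  qed
  also have "\<dots> = (cost N x + N) * (\<Sum>W\<in>Pow a. Pw p a W) - (\<Sum>W\<in>Pow a. Pw p a W * (\<Sum>i\<in>W. dd x i))"
    by (simp add: algebra_simps sum_subtractf sum_distrib_left)
  also have "\<dots> = cost N x + N - p * (\<Sum>i\<in>a. dd x i)"
    using fa by (simp add: Pw_sum Pw_lin)
  finally show ?thesis .
qed

lemma expect_split:
  assumes "finite a" "0 \<le> p" "p \<le> 1" "\<forall>n<N. 0 \<le> q n \<and> q n \<le> 1"
    and "\<And>W C. W \<subseteq> a \<Longrightarrow> C \<subseteq> {..<N} \<Longrightarrow> \<bar>f (nxt x W C)\<bar> \<le> M"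
  shows "\<bar>expect N p q f x a - (1 - p) ^ card a * (\<Sum>C\<in>Pow {..<N}. Qc N q C * f (nxt x {} C))\<bar>
          \<le> (1 - (1 - p) ^ card a) * M"
proof -
  define F where "F W = (\<Sum>C\<in>Pow {..<N}. Qc N q C * f (nxt x W C))" for W
  have FM: "\<bar>F W\<bar> \<le> M" if "W \<subseteq> a" for W
  proof -
    have "\<bar>F W\<bar> \<le> (\<Sum>C\<in>Pow {..<N}. \<bar>Qc N q C * f (nxt x W C)\<bar>)"
      unfolding F_def by (rule sum_abs)
    also have "\<dots> \<le> (\<Sum>C\<in>Pow {..<N}. Qc N q C * M)"
      using assms(4,5) that
      by (intro sum_mono) (auto simp: abs_mult Qc_nonneg intro!: mult_left_mono)
    also have "\<dots> = M" by (simp add: sum_distrib_right[symmetric] Qc_sum)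
    finally show ?thesis .
  qed
  have fP: "finite (Pow a)" using assms(1) by simp
  have "expect N p q f x a = Pw p a {} * F {} + (\<Sum>W\<in>Pow a - {{}}. Pw p a W * F W)"
    unfolding expect_Pw[OF assms(1)] F_def[symmetric]
    by (subst sum.remove[OF fP, of "{}"]) auto
  then have "\<bar>expect N p q f x a - (1 - p) ^ card a * F {}\<bar> = \<bar>\<Sum>W\<in>Pow a - {{}}. Pw p a W * F W\<bar>"
    by (simp add: Pw_empty)
  also have "\<dots> \<le> (\<Sum>W\<in>Pow a - {{}}. \<bar>Pw p a W * F W\<bar>)" by (rule sum_abs)
  also have "\<dots> \<le> (\<Sum>W\<in>Pow a - {{}}. Pw p a W * M)"
    using FM assms(2,3)
    by (intro sum_mono) (auto simp: abs_mult Pw_nonneg intro!: mult_left_mono)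
  also have "\<dots> = (\<Sum>W\<in>Pow a - {{}}. Pw p a W) * M" by (simp add: sum_distrib_right)
  also have "(\<Sum>W\<in>Pow a - {{}}. Pw p a W) = 1 - (1 - p) ^ card a"
    using Pw_sum[OF assms(1), of p] sum.remove[OF fP, of "{}" "Pw p a"] by (simp add: Pw_empty)
  finally show ?thesis unfolding F_def .
qed




lemma valid_nxt:
  assumes "valid_state N x" "W \<subseteq> srcs N x"
  shows "valid_state N (nxt x W C)"
  unfolding valid_state_def
proof (intro allI impI)
  fix n assume n: "n < N"
  show "case fst (nxt x W C) n of None \<Rightarrow> True | Some a \<Rightarrow> a < snd (nxt x W C) n"
  proof (cases "fst x n")
    case None
    then show ?thesis using assms(2) unfolding nxt_def srcs_def by auto
  next
    case (Some g)
    then have "g < snd x n" using assms(1) n unfolding valid_state_def by (metis option.simps(5))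
    then show ?thesis using Some unfolding nxt_def by auto
  qed
qed

lemma nrm_ge: "n < N \<Longrightarrow> real (snd x n) + 1 \<le> state_norm N x"
  unfolding state_norm_def by (rule Max_ge) auto

lemma nrm_pos: "1 \<le> N \<Longrightarrow> 1 \<le> state_norm N x"
  using nrm_ge[of 0 N x] by simp

lemma nrm_nxt:
  assumes "1 \<le> N" "valid_state N x" "W \<subseteq> srcs N x"
  shows "state_norm N (nxt x W C) \<le> state_norm N x + 1"
  unfolding state_norm_def
proof (rule Max.boundedI)
  show "finite ((\<lambda>n. real (snd (nxt x W C) n + 1)) ` {..<N})" by simp
  have "0 \<in> {..<N}" using assms(1) by simp
  then show "(\<lambda>n. real (snd (nxt x W C) n + 1)) ` {..<N} \<noteq> {}" by blast
  fix r assume "r \<in> (\<lambda>n. real (snd (nxt x W C) n + 1)) ` {..<N}"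
  then obtain n where n: "n < N" and r: "r = real (snd (nxt x W C) n + 1)" by auto
  have "snd (nxt x W C) n \<le> snd x n + 1"
  proof (cases "n \<in> W")
    case True
    then have "fst x n \<noteq> None" using assms(3) unfolding srcs_def by auto
    then obtain g where g0: "fst x n = Some g" by auto
    then have "g < snd x n" using assms(2) n unfolding valid_state_def by (metis option.simps(5))
    note g0 this
    then show ?thesis using True unfolding nxt_def by simp
  qed (simp add: nxt_def)
  then have "r \<le> real (snd x n) + 1 + 1" unfolding r by simp
  also have "\<dots> \<le> state_norm N x + 1" using nrm_ge[OF n, of x] by simp
  finally show "r \<le> Max ((\<lambda>n. real (snd x n + 1)) ` {..<N}) + 1"
    unfolding state_norm_def .
qed

lemma dd_bounds:
  assumes "valid_state N x" "i \<in> srcs N x"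
  shows "0 \<le> dd x i" "dd x i \<le> state_norm N x"
proof -
  have i: "i < N" "fst x i \<noteq> None" using assms(2) unfolding srcs_def by auto
  then obtain g where g0: "fst x i = Some g" by auto
  then have "g < snd x i" using assms(1) i unfolding valid_state_def by (metis option.simps(5))
  note g = g0 this i(1)
  then show "0 \<le> dd x i" unfolding dd_def by simp
  show "dd x i \<le> state_norm N x" using g nrm_ge[OF g(3), of x] unfolding dd_def by simp
qed

lemma fin_srcs: "finite (srcs N x)"
proof -
  have "srcs N x \<subseteq> {..<N}" unfolding srcs_def by auto
  then show ?thesis by (rule finite_subset) simp
qed

lemma adm_fin: "finite (adm N d x)"
proof -
  have "adm N d x \<subseteq> Pow (srcs N x)" unfolding adm_def by blast
  moreover have "finite (Pow (srcs N x))" using fin_srcs by simp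
  ultimately show ?thesis by (rule finite_subset)
qed

lemma adm_sub: "a \<in> adm N d x \<Longrightarrow> a \<subseteq> srcs N x"
  by (simp add: adm_def)

lemma adm_finite: "a \<in> adm N d x \<Longrightarrow> finite a"
  by (rule finite_subset[OF adm_sub fin_srcs])

lemma adm_card: "a \<in> adm N d x \<Longrightarrow> card a = min (card (srcs N x)) d"
  by (simp add: adm_def)

lemma sum_dd_bounds:
  assumes "valid_state N x" "a \<in> adm N d x" "1 \<le> N"
  shows "0 \<le> (\<Sum>i\<in>a. dd x i)" "(\<Sum>i\<in>a. dd x i) \<le> real d * state_norm N x"
proof -
  show "0 \<le> (\<Sum>i\<in>a. dd x i)" using dd_bounds(1)[OF assms(1)] adm_sub[OF assms(2)]
    by (intro sum_nonneg) auto
  have "(\<Sum>i\<in>a. dd x i) \<le> (\<Sum>i\<in>a. state_norm N x)"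
    using dd_bounds(2)[OF assms(1)] adm_sub[OF assms(2)] by (intro sum_mono) auto
  also have "\<dots> = real (card a) * state_norm N x" by simp
  also have "\<dots> \<le> real d * state_norm N x"
  proof (rule mult_right_mono)
    show "real (card a) \<le> real d" using adm_card[OF assms(2)] by simp
    show "0 \<le> state_norm N x" using nrm_pos[OF assms(3), of x] by simp
  qed
  finally show "(\<Sum>i\<in>a. dd x i) \<le> real d * state_norm N x" .
qed




lemma expect_const: "finite a \<Longrightarrow> expect N p q (\<lambda>y. e) x a = e"
  using expect_affine[of a N p q 0 "\<lambda>y. 0" e x] by simp

lemma pmin: "(- (p::real)) ^ Suc k = - (p * ((- 1) ^ k * p ^ k))"
  by (simp add: power_minus[of p k])

lemma pd_id: "p_d (Suc m) p = p * C_p (Suc m) p"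
proof -
  have "(1 - p) ^ Suc m = (- p + 1) ^ Suc m" by simp
  also have "\<dots> = (\<Sum>k\<le>Suc m. real (Suc m choose k) * (- p) ^ k * 1 ^ (Suc m - k))"
    by (rule binomial_ring)
  also have "\<dots> = (\<Sum>k\<le>Suc m. real (Suc m choose k) * (- p) ^ k)"
    by simp
  also have "\<dots> = 1 + (\<Sum>k\<le>m. real (Suc m choose Suc k) * (- p) ^ Suc k)"
    by (subst sum.atMost_Suc_shift) (simp del: binomial_Suc_Suc)
  also have "(\<Sum>k\<le>m. real (Suc m choose Suc k) * (- p) ^ Suc k)
      = (\<Sum>l<Suc m. - (p * ((- 1) ^ l * real (Suc m choose (l + 1)) * p ^ l)))"
    unfolding lessThan_Suc_atMost
  proof (rule sum.cong[OF refl])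
    fix k
    show "real (Suc m choose Suc k) * (- p) ^ Suc k = - (p * ((- 1) ^ k * real (Suc m choose (k + 1)) * p ^ k))"
      unfolding pmin by (simp del: binomial_Suc_Suc power_Suc)
  qed
  also have "\<dots> = - (p * C_p (Suc m) p)"
    unfolding C_p_def sum_negf sum_distrib_left by (simp del: binomial_Suc_Suc power_Suc)
  finally show ?thesis
    unfolding p_d_def by simp
qed

locale aoi =
  fixes N d :: nat and q :: "nat \<Rightarrow> real" and dr :: "state \<Rightarrow> nat set"
  assumes N1: "N \<ge> 1" and d1: "d \<ge> 1" and qb: "\<forall>n<N. 0 \<le> q n \<and> q n \<le> 1"
    and drd: "\<forall>x. valid_state N x \<longrightarrow> is_delta_action N d x (dr x)"
begin

lemma dr_adm: "valid_state N x \<Longrightarrow> dr x \<in> adm N d x"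
  using drd unfolding is_delta_action_def by blast

lemma sum_dd_int: "sum (dd x) A = - real_of_int (\<Sum>i\<in>A. int (the (fst x i)) - int (snd x i))"
  by (simp add: dd_def of_int_sum sum_negf[symmetric])

lemma dr_min: "valid_state N x \<Longrightarrow> b \<in> adm N d x \<Longrightarrow> sum (dd x) b \<le> sum (dd x) (dr x)"
proof -
  assume v: "valid_state N x" and b: "b \<in> adm N d x"
  then have "(\<Sum>i\<in>dr x. int (the (fst x i)) - int (snd x i)) \<le> (\<Sum>i\<in>b. int (the (fst x i)) - int (snd x i))"
    using drd unfolding is_delta_action_def by blast
  then have "real_of_int (\<Sum>i\<in>dr x. int (the (fst x i)) - int (snd x i)) \<le> real_of_int (\<Sum>i\<in>b. int (the (fst x i)) - int (snd x i))"
    by linarith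
  then show ?thesis unfolding sum_dd_int by linarith
qed

lemma Vopt_Suc:
  assumes "valid_state N x"
  obtains a where "a \<in> adm N d x"
    "Vopt N d p q (Suc k) x = cost N x + expect N p q (Vopt N d p q k) x a"
    "\<And>b. b \<in> adm N d x \<Longrightarrow> expect N p q (Vopt N d p q k) x a \<le> expect N p q (Vopt N d p q k) x b"
proof -
  let ?E = "\<lambda>a. expect N p q (Vopt N d p q k) x a"
  have fin: "finite (?E ` adm N d x)" using adm_fin by simp
  have ne: "?E ` adm N d x \<noteq> {}" using dr_adm[OF assms] by blast
  have "Min (?E ` adm N d x) \<in> ?E ` adm N d x" using Min_in[OF fin ne] .
  then obtain a where a: "a \<in> adm N d x" "Min (?E ` adm N d x) = ?E a" by auto
  show ?thesis
  proof (rule that[OF a(1)])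
    show "Vopt N d p q (Suc k) x = cost N x + ?E a" using a(2) by simp
    fix b assume "b \<in> adm N d x"
    then show "?E a \<le> ?E b" using Min_le[OF fin] a(2) by (metis imageI)
  qed
qed

definition Lf :: "nat \<Rightarrow> state \<Rightarrow> real" where
  "Lf k y = real (Suc k) * cost N y + real N * real k * real (Suc k) / 2"

lemma expect_Lf:
  assumes "valid_state N x" "a \<in> adm N d x"
  shows "expect N p q (\<lambda>y. Lf k y - K) x a
     = real (Suc k) * (cost N x + N - p * sum (dd x) a) + real N * real k * real (Suc k) / 2 - K"
proof -
  have "(\<lambda>y. Lf k y - K) = (\<lambda>y. real (Suc k) * cost N y + (real N * real k * real (Suc k) / 2 - K))"
    by (rule ext) (simp add: Lf_def)
  then show ?thesis
    using expect_affine[OF adm_finite[OF assms(2)], of N p q "real (Suc k)" "cost N"]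
      expect_cost[OF assms(1) adm_sub[OF assms(2)], of p q]
    by simp
qed

lemma nxt_facts:
  assumes "valid_state N x" "a \<in> adm N d x" "W \<subseteq> a"
  shows "valid_state N (nxt x W C)" "state_norm N (nxt x W C) \<le> state_norm N x + 1"
proof -
  have "W \<subseteq> srcs N x" using adm_sub[OF assms(2)] assms(3) by blast
  then show "valid_state N (nxt x W C)" "state_norm N (nxt x W C) \<le> state_norm N x + 1"
    using valid_nxt[OF assms(1)] nrm_nxt[OF N1 assms(1)] by auto
qed

end



context aoi begin

lemma V1:
  "\<exists>\<beta> \<gamma>. 0 \<le> \<beta> \<and> 0 \<le> \<gamma> \<and> (\<forall>p. 0 < p \<and> p \<le> 1 \<longrightarrow> (\<forall>y. valid_state N y \<longrightarrow>
      Vopt N d p q k y \<le> Lf k y \<and> Lf k y - p * (\<beta> * state_norm N y + \<gamma>) \<le> Vopt N d p q k y))"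
proof (induction k)
  case 0
  show ?case by (rule exI[of _ 0], rule exI[of _ 0]) (simp add: Lf_def)
next
  case (Suc k)
  then obtain \<beta> \<gamma> where bg: "0 \<le> \<beta>" "0 \<le> \<gamma>" and
    IH: "\<And>p y. 0 < p \<Longrightarrow> p \<le> 1 \<Longrightarrow> valid_state N y \<Longrightarrow>
      Vopt N d p q k y \<le> Lf k y \<and> Lf k y - p * (\<beta> * state_norm N y + \<gamma>) \<le> Vopt N d p q k y"
    by blast
  define \<beta>' where "\<beta>' = \<beta> + real (Suc k) * real d"
  define \<gamma>' where "\<gamma>' = \<beta> + \<gamma>"
  have b': "0 \<le> \<beta>'" "0 \<le> \<gamma>'" using bg by (auto simp: \<beta>'_def \<gamma>'_def)
  show ?case
  proof (intro exI conjI allI impI)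
    show "0 \<le> \<beta>'" "0 \<le> \<gamma>'" by (fact b')+
    fix p :: real and y assume p: "0 < p \<and> p \<le> 1" and y: "valid_state N y"
    let ?E = "\<lambda>a. expect N p q (Vopt N d p q k) y a"
    let ?c = "real N * real k * real (Suc k) / 2"
    obtain a where a: "a \<in> adm N d y" "Vopt N d p q (Suc k) y = cost N y + ?E a"
      and amin: "\<And>b. b \<in> adm N d y \<Longrightarrow> ?E a \<le> ?E b"
      using Vopt_Suc[OF y] by metis
    have \<delta>: "dr y \<in> adm N d y" by (rule dr_adm[OF y])
    have "?E (dr y) \<le> expect N p q (\<lambda>y'. Lf k y' - 0) y (dr y)"
      using p IH nxt_facts[OF y \<delta>]
      by (intro expect_mono[OF adm_finite[OF \<delta>] _ _ qb]) auto
    also have "\<dots> = real (Suc k) * (cost N y + N - p * sum (dd y) (dr y)) + ?c - 0"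
      by (rule expect_Lf[OF y \<delta>])
    also have "\<dots> \<le> real (Suc k) * (cost N y + N) + ?c"
    proof -
      have h: "0 \<le> real (Suc k) * (p * sum (dd y) (dr y))"
        using sum_dd_bounds(1)[OF y \<delta> N1] p by (intro mult_nonneg_nonneg) auto
      have e: "real (Suc k) * (cost N y + N - p * sum (dd y) (dr y)) + ?c - 0
         = real (Suc k) * (cost N y + N) + ?c - real (Suc k) * (p * sum (dd y) (dr y))"
        by (simp add: algebra_simps)
      show ?thesis using e h by linarith
    qed
    finally have up: "?E (dr y) \<le> real (Suc k) * (cost N y + N) + ?c" .
    have "Vopt N d p q (Suc k) y \<le> cost N y + ?E (dr y)" using a(2) amin[OF \<delta>] by simp
    also have "\<dots> \<le> Lf (Suc k) y"
    proof -
      have e: "Lf (Suc k) y = cost N y + (real (Suc k) * (cost N y + N) + ?c)"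
        unfolding Lf_def by (simp add: field_simps)
      show ?thesis using e up by linarith
    qed
    finally show "Vopt N d p q (Suc k) y \<le> Lf (Suc k) y" .
    let ?K = "p * (\<beta> * (state_norm N y + 1) + \<gamma>)"
    have "expect N p q (\<lambda>y'. Lf k y' - ?K) y a \<le> ?E a"
    proof (rule expect_mono[OF adm_finite[OF a(1)] _ _ qb])
      fix W C assume W: "W \<subseteq> a" "C \<subseteq> {..<N}"
      have v: "valid_state N (nxt y W C)" "state_norm N (nxt y W C) \<le> state_norm N y + 1"
        using nxt_facts[OF y a(1) W(1)] by auto
      have "p * (\<beta> * state_norm N (nxt y W C) + \<gamma>) \<le> ?K"
        using v(2) bg p by (intro mult_left_mono add_right_mono mult_left_mono) auto
      then show "Lf k (nxt y W C) - ?K \<le> Vopt N d p q k (nxt y W C)"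
        using IH[of p "nxt y W C"] p v(1) by linarith
    qed (use p in auto)
    also have "expect N p q (\<lambda>y'. Lf k y' - ?K) y a = real (Suc k) * (cost N y + N - p * sum (dd y) a) + ?c - ?K"
      by (rule expect_Lf[OF y a(1)])
    finally have lo: "real (Suc k) * (cost N y + N - p * sum (dd y) a) + ?c - ?K \<le> ?E a" .
    have "p * sum (dd y) a \<le> p * (real d * state_norm N y)"
      using sum_dd_bounds(2)[OF y a(1) N1] p by (intro mult_left_mono) auto
    then have "real (Suc k) * (p * sum (dd y) a) \<le> real (Suc k) * (p * (real d * state_norm N y))"
      by (rule mult_left_mono) auto
    then have "Lf (Suc k) y - p * (\<beta>' * state_norm N y + \<gamma>') \<le> cost N y + (real (Suc k) * (cost N y + N - p * sum (dd y) a) + ?c - ?K)"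
    proof -
      have e1: "Lf (Suc k) y - p * (\<beta>' * state_norm N y + \<gamma>') = cost N y + (real (Suc k) * (cost N y + N) + ?c)
          - real (Suc k) * (p * (real d * state_norm N y)) - ?K"
        unfolding Lf_def \<beta>'_def \<gamma>'_def by (simp add: field_simps)
      have e2: "real (Suc k) * (cost N y + N - p * sum (dd y) a) + ?c - ?K
          = real (Suc k) * (cost N y + N) + ?c - real (Suc k) * (p * sum (dd y) a) - ?K"
        by (simp add: algebra_simps)
      show ?thesis using e1 e2 \<open>real (Suc k) * (p * sum (dd y) a) \<le> _\<close> by linarith
    qed
    also have "\<dots> \<le> Vopt N d p q (Suc k) y" using lo a(2) by simp
    finally show "Lf (Suc k) y - p * (\<beta>' * state_norm N y + \<gamma>') \<le> Vopt N d p q (Suc k) y" .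
  qed
qed


lemma V2:
  "\<exists>A B. 0 \<le> A \<and> 0 \<le> B \<and> (\<forall>p. 0 < p \<and> p \<le> 1 \<longrightarrow> (\<forall>x. valid_state N x \<longrightarrow>
      0 \<le> Vpol N p q dr k x - Vopt N d p q k x \<and>
      Vpol N p q dr k x - Vopt N d p q k x \<le> p\<^sup>2 * (A * state_norm N x + B)))"
proof (induction k)
  case 0
  show ?case by (rule exI[of _ 0], rule exI[of _ 0]) simp
next
  case (Suc k)
  then obtain A B where AB: "0 \<le> A" "0 \<le> B" and
    IH: "\<And>p y. 0 < p \<Longrightarrow> p \<le> 1 \<Longrightarrow> valid_state N y \<Longrightarrow>
      0 \<le> Vpol N p q dr k y - Vopt N d p q k y \<and>
      Vpol N p q dr k y - Vopt N d p q k y \<le> p\<^sup>2 * (A * state_norm N y + B)"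
    by blast
  obtain \<beta> \<gamma> where bg: "0 \<le> \<beta>" "0 \<le> \<gamma>" and
    VB: "\<And>p y. 0 < p \<Longrightarrow> p \<le> 1 \<Longrightarrow> valid_state N y \<Longrightarrow>
      Vopt N d p q k y \<le> Lf k y \<and> Lf k y - p * (\<beta> * state_norm N y + \<gamma>) \<le> Vopt N d p q k y"
    using V1[of k] by blast
  define A' where "A' = A + 2 * real d * \<beta>"
  define B' where "B' = A + B + 2 * real d * (\<beta> + \<gamma>)"
  have AB': "0 \<le> A'" "0 \<le> B'" using AB bg by (auto simp: A'_def B'_def)
  show ?case
  proof (intro exI conjI allI impI)
    show "0 \<le> A'" "0 \<le> B'" by (fact AB')+
    fix p :: real and x assume p: "0 < p \<and> p \<le> 1" and x: "valid_state N x"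
    let ?E = "\<lambda>a. expect N p q (Vopt N d p q k) x a"
    let ?c = "real N * real k * real (Suc k) / 2"
    let ?n = "state_norm N x"
    obtain a where a: "a \<in> adm N d x" "Vopt N d p q (Suc k) x = cost N x + ?E a"
      and amin: "\<And>b. b \<in> adm N d x \<Longrightarrow> ?E a \<le> ?E b"
      using Vopt_Suc[OF x] by metis
    have \<delta>: "dr x \<in> adm N d x" by (rule dr_adm[OF x])
    define D where "D y = Vpol N p q dr k y - Vopt N d p q k y" for y
    have VP: "Vpol N p q dr (Suc k) x = cost N x + expect N p q D x (dr x) + ?E (dr x)"
      using expect_diff[of N p q "Vpol N p q dr k" "Vopt N d p q k" x "dr x"]
      by (simp add: D_def[abs_def])
    have D0: "0 \<le> expect N p q D x (dr x)"
    proof -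
      have "expect N p q (\<lambda>y. 0) x (dr x) \<le> expect N p q D x (dr x)"
        using p IH nxt_facts[OF x \<delta>] unfolding D_def
        by (intro expect_mono[OF adm_finite[OF \<delta>] _ _ qb]) auto
      then show ?thesis using expect_const[OF adm_finite[OF \<delta>]] by simp
    qed
    have D1: "expect N p q D x (dr x) \<le> p\<^sup>2 * (A * (?n + 1) + B)"
    proof -
      have "expect N p q D x (dr x) \<le> expect N p q (\<lambda>y. p\<^sup>2 * (A * (?n + 1) + B)) x (dr x)"
      proof (rule expect_mono[OF adm_finite[OF \<delta>] _ _ qb])
        fix W C assume W: "W \<subseteq> dr x" "C \<subseteq> {..<N}"
        have v: "valid_state N (nxt x W C)" "state_norm N (nxt x W C) \<le> ?n + 1"
          using nxt_facts[OF x \<delta> W(1)] by auto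
        have "p\<^sup>2 * (A * state_norm N (nxt x W C) + B) \<le> p\<^sup>2 * (A * (?n + 1) + B)"
          using v(2) AB by (intro mult_left_mono add_right_mono mult_left_mono) auto
        then show "D (nxt x W C) \<le> p\<^sup>2 * (A * (?n + 1) + B)"
          using IH[of p "nxt x W C"] p v(1) unfolding D_def by linarith
      qed (use p in auto)
      then show ?thesis using expect_const[OF adm_finite[OF \<delta>]] by simp
    qed
    have m0: "?E a \<le> ?E (dr x)" by (rule amin[OF \<delta>])
    define g where "g y = Vopt N d p q k y - Lf k y" for y
    define M where "M = p * (\<beta> * (?n + 1) + \<gamma>)"
    have M0: "0 \<le> M" unfolding M_def using p bg nrm_pos[OF N1, of x] by auto
    have Edec: "?E b = real (Suc k) * (cost N x + N - p * sum (dd x) b) + ?c + expect N p q g x b"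
      if b: "b \<in> adm N d x" for b
      using expect_diff[of N p q "Vopt N d p q k" "Lf k" x b] expect_Lf[OF x b, of p k 0]
      by (simp add: g_def[abs_def])
    have gM: "\<bar>g (nxt x W C)\<bar> \<le> M" if b: "b \<in> adm N d x" and W: "W \<subseteq> b" for b W C
    proof -
      have v: "valid_state N (nxt x W C)" "state_norm N (nxt x W C) \<le> ?n + 1"
        using nxt_facts[OF x b W] by auto
      have "p * (\<beta> * state_norm N (nxt x W C) + \<gamma>) \<le> M"
        unfolding M_def using v(2) bg p by (intro mult_left_mono add_right_mono mult_left_mono) auto
      then show ?thesis using VB[of p "nxt x W C"] p v(1) unfolding g_def by auto
    qed
    define m where "m = card (dr x)"
    have cm: "card a = m" unfolding m_def using adm_card[OF a(1)] adm_card[OF \<delta>] by simp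
    have md: "m \<le> d" unfolding m_def using adm_card[OF \<delta>] by simp
    define G0 where "G0 = (\<Sum>C\<in>Pow {..<N}. Qc N q C * g (nxt x {} C))"
    have s1: "\<bar>expect N p q g x (dr x) - (1 - p) ^ m * G0\<bar> \<le> (1 - (1 - p) ^ m) * M"
      unfolding m_def G0_def
      by (rule expect_split[OF adm_finite[OF \<delta>] _ _ qb]) (use p gM[OF \<delta>] in auto)
    have s2: "\<bar>expect N p q g x a - (1 - p) ^ m * G0\<bar> \<le> (1 - (1 - p) ^ m) * M"
      unfolding cm[symmetric] G0_def
      by (rule expect_split[OF adm_finite[OF a(1)] _ _ qb]) (use p gM[OF a(1)] in auto)
    have bern: "1 - (1 - p) ^ m \<le> real d * p"
    proof -
      have "1 + real m * (- p) \<le> (1 + - p) ^ m" by (rule Bernoulli_inequality) (use p in auto)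
      then have "1 - (1 - p) ^ m \<le> real m * p" by simp
      also have "\<dots> \<le> real d * p" using md p by (intro mult_right_mono) auto
      finally show ?thesis .
    qed
    have gdiff: "expect N p q g x (dr x) - expect N p q g x a \<le> 2 * (real d * p) * M"
    proof -
      have "expect N p q g x (dr x) - expect N p q g x a \<le> 2 * ((1 - (1 - p) ^ m) * M)"
        using s1 s2 by linarith
      also have "\<dots> \<le> 2 * ((real d * p) * M)" using bern M0 by (intro mult_left_mono mult_right_mono) auto
      finally show ?thesis by simp
    qed
    have ldiff: "real (Suc k) * (cost N x + N - p * sum (dd x) (dr x)) \<le> real (Suc k) * (cost N x + N - p * sum (dd x) a)"
      using dr_min[OF x a(1)] p by (intro mult_left_mono) (auto intro: mult_left_mono)
    have main: "?E (dr x) - ?E a \<le> 2 * (real d * p) * M"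
      using Edec[OF \<delta>] Edec[OF a(1)] ldiff gdiff by linarith
    have eqfin: "p\<^sup>2 * (A * (?n + 1) + B) + 2 * (real d * p) * M = p\<^sup>2 * (A' * ?n + B')"
      unfolding M_def A'_def B'_def by (simp add: algebra_simps power2_eq_square)
    have "Vpol N p q dr (Suc k) x - Vopt N d p q (Suc k) x = expect N p q D x (dr x) + (?E (dr x) - ?E a)"
      using VP a(2) by simp
    then show "0 \<le> Vpol N p q dr (Suc k) x - Vopt N d p q (Suc k) x"
      "Vpol N p q dr (Suc k) x - Vopt N d p q (Suc k) x \<le> p\<^sup>2 * (A' * ?n + B')"
      using D0 D1 m0 main eqfin by linarith+
  qed
qed

end



theorem theorem1:
  fixes N d T :: nat and q :: "nat \<Rightarrow> real" and dr :: "state \<Rightarrow> nat set"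
  assumes "N \<ge> 1" and "d \<ge> 1"
    and "\<forall>n<N. 0 \<le> q n \<and> q n \<le> 1"
    and "\<forall>x. valid_state N x \<longrightarrow> is_delta_action N d x (dr x)"
  shows "\<exists>D1 D2 :: nat \<Rightarrow> real. \<forall>p::real. 0 < p \<and> p \<le> 1 \<longrightarrow>
           p_d d p = p * C_p d p \<and>
           (\<exists>Z :: nat \<Rightarrow> state \<Rightarrow> real. \<forall>t\<in>{1..T}. \<forall>x. valid_state N x \<longrightarrow>
              Z t x \<ge> 0 \<and>
              Vpol N p q dr (T - t) x - Vopt N d p q (T - t) x = p * p_d d p * Z t x \<and>
              \<bar>Z t x\<bar> \<le> D1 (T - t) * state_norm N x + D2 (T - t))"
proof -
  interpret aoi N d q dr using assms by unfold_locales
  have "\<forall>k. \<exists>A. \<exists>B. 0 \<le> A \<and> 0 \<le> B \<and> (\<forall>p. 0 < p \<and> p \<le> 1 \<longrightarrow> (\<forall>x. valid_state N x \<longrightarrow>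
      0 \<le> Vpol N p q dr k x - Vopt N d p q k x \<and>
      Vpol N p q dr k x - Vopt N d p q k x \<le> p\<^sup>2 * (A * state_norm N x + B)))"
    using V2 by blast
  then obtain D1 where "\<forall>k. \<exists>B. 0 \<le> D1 k \<and> 0 \<le> B \<and> (\<forall>p. 0 < p \<and> p \<le> 1 \<longrightarrow> (\<forall>x. valid_state N x \<longrightarrow>
      0 \<le> Vpol N p q dr k x - Vopt N d p q k x \<and>
      Vpol N p q dr k x - Vopt N d p q k x \<le> p\<^sup>2 * (D1 k * state_norm N x + B)))"
    by (metis choice)
  then obtain D2 where H: "\<forall>k. 0 \<le> D1 k \<and> 0 \<le> D2 k \<and> (\<forall>p. 0 < p \<and> p \<le> 1 \<longrightarrow> (\<forall>x. valid_state N x \<longrightarrow>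
      0 \<le> Vpol N p q dr k x - Vopt N d p q k x \<and>
      Vpol N p q dr k x - Vopt N d p q k x \<le> p\<^sup>2 * (D1 k * state_norm N x + D2 k)))"
    by (metis choice)
  show ?thesis
  proof (rule exI[of _ D1], rule exI[of _ D2], intro allI impI conjI)
    fix p :: real assume p: "0 < p \<and> p \<le> 1"
    obtain m where dm: "d = Suc m" using assms(2) by (cases d) auto
    show "p_d d p = p * C_p d p" unfolding dm by (rule pd_id)
    have pdp: "p \<le> p_d d p"
    proof -
      have "(1 - p) ^ d \<le> (1 - p) ^ 1"
        by (rule power_decreasing) (use p assms(2) in auto)
      then show ?thesis unfolding p_d_def by simp
    qed
    have pp: "0 < p * p" using p by simp
    have ppd: "p * p \<le> p * p_d d p" using pdp p by (intro mult_left_mono) auto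
    have ppd0: "0 < p * p_d d p" using pp ppd by linarith
    let ?Z = "\<lambda>t x. (Vpol N p q dr (T - t) x - Vopt N d p q (T - t) x) / (p * p_d d p)"
    show "\<exists>Z :: nat \<Rightarrow> state \<Rightarrow> real. \<forall>t\<in>{1..T}. \<forall>x. valid_state N x \<longrightarrow>
              Z t x \<ge> 0 \<and>
              Vpol N p q dr (T - t) x - Vopt N d p q (T - t) x = p * p_d d p * Z t x \<and>
              \<bar>Z t x\<bar> \<le> D1 (T - t) * state_norm N x + D2 (T - t)"
    proof (rule exI[of _ ?Z], intro ballI allI impI conjI)
      fix t x assume x: "valid_state N x"
      define Df where "Df = Vpol N p q dr (T - t) x - Vopt N d p q (T - t) x"
      have h: "0 \<le> Df" "Df \<le> p\<^sup>2 * (D1 (T - t) * state_norm N x + D2 (T - t))"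
        using H p x unfolding Df_def by blast+
      show z0: "0 \<le> ?Z t x" using h(1) ppd0 unfolding Df_def[symmetric] by simp
      have ne: "p * p_d d p \<noteq> 0" using ppd0 by linarith
      show "Vpol N p q dr (T - t) x - Vopt N d p q (T - t) x = p * p_d d p * ?Z t x"
        unfolding Df_def[symmetric] times_divide_eq_right
        using nonzero_mult_div_cancel_left[OF ne, of Df] by simp
      have "?Z t x \<le> Df / (p * p)"
        unfolding Df_def[symmetric] by (rule divide_left_mono[OF ppd h(1)]) (use pp ppd0 in simp)
      also have "\<dots> \<le> D1 (T - t) * state_norm N x + D2 (T - t)"
        using h(2) pp by (simp add: pos_divide_le_eq power2_eq_square mult.commute)
      finally have zb: "?Z t x \<le> D1 (T - t) * state_norm N x + D2 (T - t)" .
      show "\<bar>?Z t x\<bar> \<le> D1 (T - t) * state_norm N x + D2 (T - t)"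
        by (subst abs_of_nonneg[OF z0]) (rule zb)
    qed
  qed
qed


end
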